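(* Let $x_1,\dots,x_k\ge0$ be real numbers and let $2n$ be a nonnegative even integer. Then $$\sum_{2m_1+\cdots+2m_k=2n}\binom{2n}{2m_1,\dots,2m_k}x_1^{2m_1}\cdots x_k^{2m_k}\ \ge\ \frac{1}{2^{k-1}}\Big(\sum_{i=1}^kx_i\Big)^{2n},$$ where the sum is over all $k$-tuples of nonnegative integers $(m_1,\dots,m_k)$ with $2m_1+\cdots+2m_k=2n$. *)

theory Defs
  imports "HOL-Analysis.Analysis"
begin

definition multinomial :: "nat \<Rightarrow> nat \<Rightarrow> (nat \<Rightarrow> nat) \<Rightarrow> nat" where
  "multinomial N k a = fact N div (\<Prod>i<k. fact (a i))"

definition even_tuples :: "nat \<Rightarrow> nat \<Rightarrow> (nat \<Rightarrow> nat) set" where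
  "even_tuples k n = {m. (\<forall>i\<ge>k. m i = 0) \<and> (\<Sum>i<k. 2 * m i) = 2 * n}"

end

theory Submission
  imports Defs
begin

lemma prod_fact_dvd: fixes k :: nat and a :: "nat \<Rightarrow> nat" shows "(\<Prod>i<k. fact (a i) :: nat) dvd fact (\<Sum>i<k. a i)"
proof (induction k)
  case 0 then show ?case by simp
next
  case (Suc k)
  have "(\<Prod>i<Suc k. fact (a i) :: nat) = (\<Prod>i<k. fact (a i)) * fact (a k)" by simp
  also have "\<dots> dvd fact (\<Sum>i<k. a i) * fact (a k)" using Suc by (simp add: mult_dvd_mono)
  also have "\<dots> dvd fact ((\<Sum>i<k. a i) + a k)" by (rule fact_fact_dvd_fact)
  finally show ?case by (simp add: add.commute)
qed

lemma et_Suc: "even_tuples (Suc k) n =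
   (\<lambda>(j,m). m(k:=j)) ` (SIGMA j:{..n}. even_tuples k (n - j))"
proof
  show "even_tuples (Suc k) n \<subseteq> (\<lambda>(j,m). m(k:=j)) ` (SIGMA j:{..n}. even_tuples k (n - j))"
  proof
    fix m assume m: "m \<in> even_tuples (Suc k) n"
    have z: "\<forall>i\<ge>Suc k. m i = 0" and s: "(\<Sum>i<Suc k. 2 * m i) = 2 * n"
      using m by (auto simp: even_tuples_def)
    have s2: "(\<Sum>i<k. 2 * m i) + 2 * m k = 2 * n" using s by simp
    have eq: "(\<Sum>i<k. 2 * (m(k:=0)) i) = (\<Sum>i<k. 2 * m i)"
      by (rule sum.cong) auto
    have "m(k:=0) \<in> even_tuples k (n - m k)"
      unfolding even_tuples_def using z s2 eq
      by (auto simp: Suc_le_eq)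
    moreover have "m k \<le> n" using s2 by linarith
    moreover have "m = (m(k:=0))(k := m k)" by simp
    ultimately show "m \<in> (\<lambda>(j,m). m(k:=j)) ` (SIGMA j:{..n}. even_tuples k (n - j))"
      by (auto intro!: image_eqI[where x="(m k, m(k:=0))"])
  qed
next
  show "(\<lambda>(j,m). m(k:=j)) ` (SIGMA j:{..n}. even_tuples k (n - j)) \<subseteq> even_tuples (Suc k) n"
  proof
    fix p assume "p \<in> (\<lambda>(j,m). m(k:=j)) ` (SIGMA j:{..n}. even_tuples k (n - j))"
    then obtain j m where j: "j \<in> {..n}" and m: "m \<in> even_tuples k (n - j)" and p: "p = m(k:=j)"
      by auto
    have z: "\<forall>i\<ge>k. m i = 0" and s: "(\<Sum>i<k. 2 * m i) = 2 * (n - j)"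
      using m by (auto simp: even_tuples_def)
    have eq: "(\<Sum>i<k. 2 * (m(k:=j)) i) = (\<Sum>i<k. 2 * m i)"
      by (rule sum.cong) auto
    show "p \<in> even_tuples (Suc k) n"
      unfolding p even_tuples_def using z s eq j by auto
  qed
qed

lemma et_inj: "inj_on (\<lambda>(j,m). m(k:=j)) (SIGMA j:{..n}. even_tuples k (n - j))"
proof (rule inj_onI, clarify)
  fix j m j' m'
  assume "m \<in> even_tuples k (n - j)" "m' \<in> even_tuples k (n - j')" and e: "m(k:=j) = m'(k:=j')"
  then have "m k = 0" "m' k = 0" by (auto simp: even_tuples_def)
  have "j = j'" using fun_cong[OF e, of k] by simp
  moreover have "m = m'"
  proof
    fix i show "m i = m' i"
      using fun_cong[OF e, of i] \<open>m k = 0\<close> \<open>m' k = 0\<close> by (cases "i = k") auto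
  qed
  ultimately show "j = j' \<and> m = m'" by simp
qed

lemma et_zero: "even_tuples 0 n = (if n = 0 then {\<lambda>_. 0} else {})"
  by (auto simp: even_tuples_def)

lemma et_finite: "finite (even_tuples k n)"
proof (induction k arbitrary: n)
  case 0 then show ?case by (simp add: et_zero)
next
  case (Suc k) then show ?case by (simp add: et_Suc)
qed


definition T :: "(nat \<Rightarrow> real) \<Rightarrow> nat \<Rightarrow> nat \<Rightarrow> real" where
  "T x k n = (\<Sum>m\<in>even_tuples k n. fact (2*n) / (\<Prod>i<k. fact (2 * m i)) * (\<Prod>i<k. x i ^ (2 * m i)))"

lemma term_upd:
  assumes "j \<le> n" "m \<in> even_tuples k (n - j)"
  shows "fact (2*n) / (\<Prod>i<Suc k. fact (2 * (m(k:=j)) i)) * (\<Prod>i<Suc k. x i ^ (2 * (m(k:=j)) i))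
    = real (2*n choose (2*j)) * (fact (2*(n-j)) / (\<Prod>i<k. fact (2 * m i)) * (\<Prod>i<k. x i ^ (2 * m i))) * x k ^ (2*j)"
proof -
  have p1: "(\<Prod>i<Suc k. fact (2 * (m(k:=j)) i) :: real) = (\<Prod>i<k. fact (2 * m i)) * fact (2*j)"
    by (simp add: prod.lessThan_Suc)
  have p2: "(\<Prod>i<Suc k. x i ^ (2 * (m(k:=j)) i)) = (\<Prod>i<k. x i ^ (2 * m i)) * x k ^ (2*j)"
    by (simp add: prod.lessThan_Suc)
  have b: "real (2*n choose (2*j)) = fact (2*n) / (fact (2*j) * fact (2*(n-j)))"
    using binomial_fact[of "2*j" "2*n"] assms(1) by (simp add: diff_mult_distrib2)
  have nz: "(\<Prod>i<k. fact (2 * m i) :: real) \<noteq> 0" by simp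
  show ?thesis unfolding p1 p2 b using nz by (simp add: field_simps)
qed

lemma T_Suc: "T x (Suc k) n = (\<Sum>j\<le>n. real (2*n choose (2*j)) * T x k (n-j) * x k ^ (2*j))"
proof -
  let ?F = "\<lambda>m. fact (2*n) / (\<Prod>i<Suc k. fact (2 * m i)) * (\<Prod>i<Suc k. x i ^ (2 * m i)) :: real"
  have "T x (Suc k) n = sum ?F ((\<lambda>(j,m). m(k:=j)) ` (SIGMA j:{..n}. even_tuples k (n - j)))"
    unfolding T_def et_Suc ..
  also have "\<dots> = sum (?F \<circ> (\<lambda>(j,m). m(k:=j))) (SIGMA j:{..n}. even_tuples k (n - j))"
    by (rule sum.reindex[OF et_inj])
  also have "\<dots> = (\<Sum>j\<le>n. \<Sum>m\<in>even_tuples k (n - j). ?F (m(k:=j)))"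
    by (subst sum.Sigma) (auto simp: et_finite split_def comp_def)
  also have "\<dots> = (\<Sum>j\<le>n. real (2*n choose (2*j)) * T x k (n-j) * x k ^ (2*j))"
  proof (rule sum.cong[OF refl])
    fix j assume j: "j \<in> {..n}"
    have "(\<Sum>m\<in>even_tuples k (n - j). ?F (m(k:=j))) =
      (\<Sum>m\<in>even_tuples k (n - j). real (2*n choose (2*j)) * (fact (2*(n-j)) / (\<Prod>i<k. fact (2 * m i)) * (\<Prod>i<k. x i ^ (2 * m i))) * x k ^ (2*j))"
      by (rule sum.cong[OF refl], rule term_upd) (use j in auto)
    also have "\<dots> = real (2*n choose (2*j)) * T x k (n-j) * x k ^ (2*j)"
      unfolding T_def by (simp add: sum_distrib_left sum_distrib_right)
    finally show "(\<Sum>m\<in>even_tuples k (n - j). ?F (m(k:=j))) = real (2*n choose (2*j)) * T x k (n-j) * x k ^ (2*j)" .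
  qed
  finally show ?thesis .
qed


lemma even_split: fixes n :: nat and g :: "nat \<Rightarrow> real" shows "(\<Sum>i\<le>2*n. g i) = (\<Sum>j\<le>n. g (2*j)) + (\<Sum>j<n. g (2*j+1))"
proof (induction n)
  case 0 then show ?case by simp
next
  case (Suc n)
  have "(\<Sum>i\<le>2*Suc n. g i) = (\<Sum>i\<le>2*n. g i) + g (2*n+1) + g (2*n+2)"
    by (simp add: sum.atMost_Suc)
  then show ?case using Suc by (simp add: sum.atMost_Suc sum.lessThan_Suc)
qed

lemma binom_even:
  fixes a b :: real
  shows "(\<Sum>j\<le>n. real (2*n choose (2*j)) * a ^ (2*(n-j)) * b ^ (2*j)) = ((a+b)^(2*n) + (a-b)^(2*n)) / 2"
proof -
  define g where "g i = real (2*n choose i) * b ^ i * a ^ (2*n-i) * (1 + (-1)^i)" for i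
  have "(a+b)^(2*n) + (a-b)^(2*n) = (b+a)^(2*n) + ((-b)+a)^(2*n)" by (simp add: add.commute)
  also have "\<dots> = (\<Sum>i\<le>2*n. g i)"
    unfolding binomial_ring g_def
    by (simp add: sum.distrib[symmetric] power_mult_distrib power_minus[of b] algebra_simps)
  also have "\<dots> = (\<Sum>j\<le>n. g (2*j)) + (\<Sum>j<n. g (2*j+1))" by (rule even_split)
  also have "\<dots> = (\<Sum>j\<le>n. 2 * (real (2*n choose (2*j)) * a ^ (2*(n-j)) * b ^ (2*j)))"
    unfolding g_def by (simp add: diff_mult_distrib2 algebra_simps)
  finally show ?thesis by (simp add: sum_distrib_left[symmetric])
qed


lemma T_zero: "T x 0 m = (if m = 0 then 1 else 0)"
  unfolding T_def et_zero by simp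

lemma T_one: "T x (Suc 0) n = x 0 ^ (2*n)"
proof -
  have "T x (Suc 0) n = (\<Sum>j\<le>n. (if j = n then x 0 ^ (2*j) else 0))"
    unfolding T_Suc T_zero by (rule sum.cong) auto
  also have "\<dots> = x 0 ^ (2*n)" by (simp add: sum.delta')
  finally show ?thesis .
qed

lemma T_bound:
  assumes "\<And>i. i < Suc k \<Longrightarrow> x i \<ge> 0"
  shows "T x (Suc k) n \<ge> (1/2^k) * (\<Sum>i<Suc k. x i)^(2*n)"
  using assms
proof (induction k arbitrary: n)
  case 0 then show ?case by (simp add: T_one)
next
  case (Suc k)
  define S where "S = (\<Sum>i<Suc k. x i)"
  define y where "y = x (Suc k)"
  define c :: real where "c = 1/2^k"
  have IH: "T x (Suc k) m \<ge> c * S^(2*m)" for m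
    unfolding c_def S_def by (rule Suc.IH) (use Suc.prems in auto)
  have Sge: "S \<ge> 0" unfolding S_def by (intro sum_nonneg) (use Suc.prems in auto)
  have yge: "y \<ge> 0" unfolding y_def using Suc.prems by auto
  have "T x (Suc (Suc k)) n = (\<Sum>j\<le>n. real (2*n choose (2*j)) * T x (Suc k) (n-j) * y ^ (2*j))"
    unfolding T_Suc y_def ..
  also have "\<dots> \<ge> (\<Sum>j\<le>n. real (2*n choose (2*j)) * (c * S^(2*(n-j))) * y ^ (2*j))"
    by (intro sum_mono mult_right_mono mult_left_mono IH) (auto simp: yge)
  moreover have "(\<Sum>j\<le>n. real (2*n choose (2*j)) * (c * S^(2*(n-j))) * y ^ (2*j))
      = c * (\<Sum>j\<le>n. real (2*n choose (2*j)) * S^(2*(n-j)) * y ^ (2*j))"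
    by (simp add: sum_distrib_left algebra_simps)
  moreover have "\<dots> = c * (((S+y)^(2*n) + (S-y)^(2*n)) / 2)" by (simp add: binom_even)
  moreover have "\<dots> \<ge> c / 2 * (S+y)^(2*n)"
  proof -
    have "(S-y)^(2*n) \<ge> 0" by (simp add: power_mult)
    moreover have "c \<ge> 0" unfolding c_def by simp
    ultimately show ?thesis by (simp add: field_simps)
  qed
  ultimately have "T x (Suc (Suc k)) n \<ge> c / 2 * (S+y)^(2*n)" by linarith
  moreover have "(\<Sum>i<Suc (Suc k). x i) = S + y" unfolding S_def y_def by simp
  moreover have "c / 2 = 1 / 2 ^ Suc k" unfolding c_def by simp
  ultimately show ?case by simp
qed

theorem lemma9:
  fixes x :: "nat \<Rightarrow> real" and k n :: nat
  assumes "k \<ge> 1"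
    and "\<And>i. i < k \<Longrightarrow> x i \<ge> 0"
  shows "(\<Sum>m\<in>even_tuples k n.
            real (multinomial (2 * n) k (\<lambda>i. 2 * m i)) * (\<Prod>i<k. x i ^ (2 * m i)))
         \<ge> (1 / 2 ^ (k - 1)) * (\<Sum>i<k. x i) ^ (2 * n)"
proof -
  obtain k' where k: "k = Suc k'" using assms(1) by (cases k) auto
  have "(\<Sum>m\<in>even_tuples k n.
            real (multinomial (2 * n) k (\<lambda>i. 2 * m i)) * (\<Prod>i<k. x i ^ (2 * m i))) = T x k n"
    unfolding T_def
  proof (rule sum.cong[OF refl])
    fix m assume m: "m \<in> even_tuples k n"
    then have s: "(\<Sum>i<k. 2 * m i) = 2 * n" by (simp add: even_tuples_def)
    have d: "(\<Prod>i<k. fact (2 * m i) :: nat) dvd fact (2 * n)"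
      using prod_fact_dvd[where k=k and a="\<lambda>i. 2 * m i"] s by simp
    have "real (multinomial (2 * n) k (\<lambda>i. 2 * m i)) = fact (2*n) / (\<Prod>i<k. fact (2 * m i))"
      unfolding multinomial_def using real_of_nat_div[OF d] by (simp add: of_nat_prod)
    then show "real (multinomial (2 * n) k (\<lambda>i. 2 * m i)) * (\<Prod>i<k. x i ^ (2 * m i)) =
       fact (2*n) / (\<Prod>i<k. fact (2 * m i)) * (\<Prod>i<k. x i ^ (2 * m i))" by simp
  qed
  moreover have "T x k n \<ge> (1 / 2 ^ (k - 1)) * (\<Sum>i<k. x i) ^ (2 * n)"
    unfolding k using T_bound[of k' x n] assms(2) k by simp
  ultimately show ?thesis by simp
qed

end
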